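(* Let $G$ be a finite transitive permutation group on a set $V$ with point stabilizers of order $3$, and suppose $G$ admits a maximal basic intersecting set $\mathcal{F}$ with $|\mathcal{F}|=4$. Then no point stabilizer $G_v$, $v\in V$, is contained in $\mathcal{F}$; that is, $\mathcal{F}=\{1,x,y,z\}$ with $x$, $y$ and $z$ belonging to different point stabilizers.
   Context: A subset $\mathcal{F}\subseteq G$ is intersecting if for all $g,h\in\mathcal{F}$ there is $v\in V$ with $g(v)=h(v)$; it is maximal if not properly contained in another intersecting set; it is basic if it contains the identity $1$. *)

theory Defs
  imports "HOL-Algebra.Bij"
begin

text \<open>A permutation group on V is a subgroup G of the group of all bijections of V
  (the carrier of G is a set of permutations of V, extensional on V).\<close>

definition transitive_on :: "'a set \<Rightarrow> ('a \<Rightarrow> 'a) set \<Rightarrow> bool" where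
  "transitive_on V G \<longleftrightarrow> (\<forall>u\<in>V. \<forall>w\<in>V. \<exists>g\<in>G. g u = w)"

definition point_stabilizer :: "('a \<Rightarrow> 'a) set \<Rightarrow> 'a \<Rightarrow> ('a \<Rightarrow> 'a) set" where
  "point_stabilizer G v = {g \<in> G. g v = v}"

definition intersecting :: "'a set \<Rightarrow> ('a \<Rightarrow> 'a) set \<Rightarrow> bool" where
  "intersecting V F \<longleftrightarrow> (\<forall>g\<in>F. \<forall>h\<in>F. \<exists>v\<in>V. g v = h v)"

definition maximal_intersecting :: "'a set \<Rightarrow> ('a \<Rightarrow> 'a) set \<Rightarrow> ('a \<Rightarrow> 'a) set \<Rightarrow> bool" where
  "maximal_intersecting V G F \<longleftrightarrow> F \<subseteq> G \<and> intersecting V F \<and>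
     (\<forall>F'. F \<subset> F' \<and> F' \<subseteq> G \<longrightarrow> \<not> intersecting V F')"

end

theory Submission
  imports Defs
begin

lemma bij_mult_apply:
  "g \<in> Bij V \<Longrightarrow> k \<in> Bij V \<Longrightarrow> u \<in> V \<Longrightarrow> (g \<otimes>\<^bsub>BijGroup V\<^esub> k) u = g (k u)"
  by (simp add: BijGroup_def compose_def)

lemma bij_one_apply: "u \<in> V \<Longrightarrow> \<one>\<^bsub>BijGroup V\<^esub> u = u"
  by (simp add: BijGroup_def)

lemma bij_carrier: "carrier (BijGroup V) = Bij V"
  by (simp add: BijGroup_def)

lemma neq_by_iff: "(P \<longleftrightarrow> Q) \<Longrightarrow> \<not> Q \<Longrightarrow> \<not> P" by blast

lemma main_part:
  fixes V :: "'a set" and G F :: "('a \<Rightarrow> 'a) set"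
  assumes sg: "subgroup G (BijGroup V)"
    and fin: "finite G"
    and c3: "\<forall>v\<in>V. card (point_stabilizer G v) = 3"
    and mi: "maximal_intersecting V G F"
    and one: "\<one>\<^bsub>BijGroup V\<^esub> \<in> F"
    and cF: "card F = 4"
    and x: "x \<in> F" "x \<noteq> \<one>\<^bsub>BijGroup V\<^esub>"
    and y: "y \<in> F" "y \<noteq> \<one>\<^bsub>BijGroup V\<^esub>"
    and xy: "x \<noteq> y"
    and v: "v \<in> V" "x \<in> point_stabilizer G v" "y \<in> point_stabilizer G v"
  shows False
proof -
  let ?B = "BijGroup V"
  let ?e = "\<one>\<^bsub>?B\<^esub>"
  interpret B: group ?B by (rule group_BijGroup)
  have FG: "F \<subseteq> G" and intF: "intersecting V F"
    and maxF: "\<forall>F'. F \<subset> F' \<and> F' \<subseteq> G \<longrightarrow> \<not> intersecting V F'"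
    using mi by (auto simp: maximal_intersecting_def)
  have GB: "G \<subseteq> Bij V" using subgroup.subset[OF sg] by (simp add: bij_carrier)
  have xG: "x \<in> G" and yG: "y \<in> G" using x y FG by auto
  have xB: "x \<in> Bij V" and yB: "y \<in> Bij V" using xG yG GB by auto
  have xv: "x v = v" and yv: "y v = v" using v by (auto simp: point_stabilizer_def)
  have eG: "?e \<in> G" using sg subgroup.one_closed by blast
  have Sv: "point_stabilizer G v = {?e, x, y}"
  proof -
    have sub: "{?e, x, y} \<subseteq> point_stabilizer G v"
      using eG bij_one_apply[OF v(1)] v(2,3) unfolding point_stabilizer_def by blast
    have c: "card {?e, x, y} = 3" using x(2) y(2) xy by simp
    have fs: "finite (point_stabilizer G v)" using fin
      unfolding point_stabilizer_def by simp
    have "card (point_stabilizer G v) = 3" using c3 v(1) by blast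
    then show ?thesis using card_subset_eq[OF fs sub] c by simp
  qed
  have closed: "a \<otimes>\<^bsub>?B\<^esub> b \<in> point_stabilizer G v"
    if "a \<in> point_stabilizer G v" "b \<in> point_stabilizer G v" for a b
  proof -
    have aG: "a \<in> G" and bG: "b \<in> G" and av: "a v = v" and bv: "b v = v"
      using that by (auto simp: point_stabilizer_def)
    have aB: "a \<in> Bij V" and bB: "b \<in> Bij V" using aG bG GB by auto
    have "(a \<otimes>\<^bsub>?B\<^esub> b) v = a (b v)" by (rule bij_mult_apply[OF aB bB v(1)])
    also have "\<dots> = v" using av bv by simp
    finally have "(a \<otimes>\<^bsub>?B\<^esub> b) v = v" .
    moreover have "a \<otimes>\<^bsub>?B\<^esub> b \<in> G" by (rule subgroup.m_closed[OF sg aG bG])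
    ultimately show ?thesis unfolding point_stabilizer_def by blast
  qed
  have xc: "x \<in> carrier ?B" and yc: "y \<in> carrier ?B" using xB yB bij_carrier by auto
  have xu: "x \<in> Units ?B" using xc B.Units_eq by simp
  have xy1: "x \<otimes>\<^bsub>?B\<^esub> y = ?e"
  proof -
    have "x \<otimes>\<^bsub>?B\<^esub> y \<in> {?e, x, y}" using closed[OF v(2) v(3)] unfolding Sv .
    moreover have "x \<otimes>\<^bsub>?B\<^esub> y \<noteq> x"
      by (rule neq_by_iff[OF B.l_cancel_one[OF xc yc] y(2)])
    moreover have "x \<otimes>\<^bsub>?B\<^esub> y \<noteq> y"
      by (rule neq_by_iff[OF B.r_cancel_one[OF yc xc] x(2)])
    ultimately show ?thesis by blast
  qed
  have xx: "x \<otimes>\<^bsub>?B\<^esub> x = y"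
  proof -
    have "x \<otimes>\<^bsub>?B\<^esub> x \<in> {?e, x, y}" using closed[OF v(2) v(2)] unfolding Sv .
    moreover have "x \<otimes>\<^bsub>?B\<^esub> x \<noteq> x"
      by (rule neq_by_iff[OF B.l_cancel_one[OF xc xc] x(2)])
    moreover have "x \<otimes>\<^bsub>?B\<^esub> x \<noteq> ?e"
    proof
      assume "x \<otimes>\<^bsub>?B\<^esub> x = ?e"
      then have "x \<otimes>\<^bsub>?B\<^esub> x = x \<otimes>\<^bsub>?B\<^esub> y" using xy1 by (rule trans[OF _ sym])
      then have "x = y" by (rule iffD1[OF B.Units_l_cancel[OF xu xc yc]])
      with xy show False by (rule notE)
    qed
    ultimately show ?thesis by blast
  qed
  have xyp: "x (y u) = u" if "u \<in> V" for u
  proof -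
    have "x (y u) = (x \<otimes>\<^bsub>?B\<^esub> y) u" by (rule sym, rule bij_mult_apply[OF xB yB that])
    also have "\<dots> = ?e u" unfolding xy1 ..
    also have "\<dots> = u" by (rule bij_one_apply[OF that])
    finally show ?thesis .
  qed
  have xxp: "x (x u) = y u" if "u \<in> V" for u
  proof -
    have "x (x u) = (x \<otimes>\<^bsub>?B\<^esub> x) u" by (rule sym, rule bij_mult_apply[OF xB xB that])
    also have "\<dots> = y u" unfolding xx ..
    finally show ?thesis .
  qed
  obtain z where z: "z \<in> F" "z \<notin> {?e, x, y}"
  proof -
    have c3': "card {?e, x, y} \<le> 3" by (auto simp: card_insert_if)
    have "\<not> F \<subseteq> {?e, x, y}"
    proof
      assume "F \<subseteq> {?e, x, y}"
      then have "card F \<le> card {?e, x, y}" by (intro card_mono) auto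
      then show False using c3' cF by linarith
    qed
    then show ?thesis using that by blast
  qed
  have zG: "z \<in> G" using z FG by auto
  have zB: "z \<in> Bij V" using zG GB by auto
  have zc: "z \<in> carrier ?B" using zB bij_carrier by auto
  define h where "h = x \<otimes>\<^bsub>?B\<^esub> z"
  have hG: "h \<in> G" unfolding h_def by (rule subgroup.m_closed[OF sg xG zG])
  have hp: "h u = x (z u)" if "u \<in> V" for u
    unfolding h_def using bij_mult_apply[OF xB zB that] .
  have hnF: "h \<notin> F"
  proof
    assume "h \<in> F"
    moreover have "h \<noteq> ?e"
    proof
      assume "h = ?e"
      then have "x \<otimes>\<^bsub>?B\<^esub> z = x \<otimes>\<^bsub>?B\<^esub> y" using xy1 unfolding h_def by (rule trans[OF _ sym])
      then have "z = y" by (rule iffD1[OF B.Units_l_cancel[OF xu zc yc]])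
      then show False using z by auto
    qed
    moreover have "h \<noteq> x" unfolding h_def
      by (rule neq_by_iff[OF B.l_cancel_one[OF xc zc]]) (use z(2) in blast)
    moreover have "h \<noteq> y"
    proof
      assume "h = y"
      then have "x \<otimes>\<^bsub>?B\<^esub> z = x \<otimes>\<^bsub>?B\<^esub> x" using xx unfolding h_def by (rule trans[OF _ sym])
      then have "z = x" by (rule iffD1[OF B.Units_l_cancel[OF xu zc xc]])
      then show False using z by auto
    qed
    moreover have "h \<noteq> z" unfolding h_def
      by (rule neq_by_iff[OF B.r_cancel_one[OF zc xc] x(2)])
    moreover have "F = {?e, x, y, z}"
    proof -
      have "{?e, x, y, z} \<subseteq> F" using one x y z by auto
      moreover have "card {?e, x, y, z} = 4" using x y z xy by auto
      ultimately show ?thesis using cF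
        by (metis card.infinite card_subset_eq zero_neq_numeral)
    qed
    ultimately show False by blast
  qed
  have int_sym: "\<exists>u\<in>V. g u = k u \<Longrightarrow> \<exists>u\<in>V. k u = g u" for g k :: "'a \<Rightarrow> 'a"
    by metis
  have hF: "\<exists>u\<in>V. h u = f u" if "f \<in> F" for f
  proof -
    have "f = ?e \<or> f = x \<or> f = y \<or> f = z"
    proof -
      have "{?e, x, y, z} \<subseteq> F" using one x y z by auto
      moreover have "card {?e, x, y, z} = 4" using x y z xy by auto
      ultimately have "F = {?e, x, y, z}" using cF
        by (metis card.infinite card_subset_eq zero_neq_numeral)
      then show ?thesis using that by blast
    qed
    moreover {
      assume "f = ?e"
      obtain u where "u \<in> V" "y u = z u" using intF y z by (auto simp: intersecting_def)
      then have "h u = f u" using hp xyp bij_one_apply \<open>f = ?e\<close> by metis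
      then have ?thesis using \<open>u \<in> V\<close> by blast }
    moreover {
      assume "f = x"
      obtain u where "u \<in> V" "z u = ?e u" using intF one z by (auto simp: intersecting_def)
      then have "h u = f u" using hp bij_one_apply \<open>f = x\<close> by metis
      then have ?thesis using \<open>u \<in> V\<close> by blast }
    moreover {
      assume "f = y"
      obtain u where "u \<in> V" "x u = z u" using intF x z by (auto simp: intersecting_def)
      then have "h u = f u" using hp xxp \<open>f = y\<close> by metis
      then have ?thesis using \<open>u \<in> V\<close> by blast }
    moreover {
      assume "f = z"
      have "v \<in> z ` V" using zB v(1) by (simp add: Bij_def bij_betw_def)
      then obtain u where "u \<in> V" "z u = v" by blast
      then have "h u = f u" using hp xv \<open>f = z\<close> by metis
      then have ?thesis using \<open>u \<in> V\<close> by blast }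
    ultimately show ?thesis by blast
  qed
  have "intersecting V (insert h F)"
    unfolding intersecting_def
  proof (intro ballI)
    fix g k assume g: "g \<in> insert h F" and k: "k \<in> insert h F"
    show "\<exists>u\<in>V. g u = k u"
    proof (cases "g = h")
      case gh: True
      show ?thesis
      proof (cases "k = h")
        case True
        have "g v = k v" using gh True by simp
        then show ?thesis using v(1) by blast
      next
        case False
        have "k \<in> F" using k False by blast
        then obtain u where u: "u \<in> V" "h u = k u" using hF by blast
        have "g u = k u" using u(2) gh by simp
        then show ?thesis using u(1) by blast
      qed
    next
      case gh: False
      have gF: "g \<in> F" using g gh by blast
      show ?thesis
      proof (cases "k = h")
        case True
        obtain u where u: "u \<in> V" "h u = g u" using hF[OF gF] by blast
        have "g u = k u" using u(2) True by simp
        then show ?thesis using u(1) by blast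
      next
        case False
        have "k \<in> F" using k False by blast
        then show ?thesis using gF intF unfolding intersecting_def by blast
      qed
    qed
  qed
  moreover have "F \<subset> insert h F" using hnF by blast
  moreover have "insert h F \<subseteq> G" using FG hG by blast
  ultimately show False using maxF by blast
qed

theorem corollary5p3:
  fixes V :: "'a set" and G F :: "('a \<Rightarrow> 'a) set"
  assumes "subgroup G (BijGroup V)"
    and "finite G"
    and "transitive_on V G"
    and "\<forall>v\<in>V. card (point_stabilizer G v) = 3"
    and "maximal_intersecting V G F"
    and "\<one>\<^bsub>BijGroup V\<^esub> \<in> F"
    and "card F = 4"
  shows "(\<forall>v\<in>V. \<not> point_stabilizer G v \<subseteq> F) \<and>
         (\<forall>x\<in>F - {\<one>\<^bsub>BijGroup V\<^esub>}. \<forall>y\<in>F - {\<one>\<^bsub>BijGroup V\<^esub>}. x \<noteq> y \<longrightarrow>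
            \<not> (\<exists>v\<in>V. x \<in> point_stabilizer G v \<and> y \<in> point_stabilizer G v))"
proof -
  have second: "\<forall>x\<in>F - {\<one>\<^bsub>BijGroup V\<^esub>}. \<forall>y\<in>F - {\<one>\<^bsub>BijGroup V\<^esub>}. x \<noteq> y \<longrightarrow>
            \<not> (\<exists>v\<in>V. x \<in> point_stabilizer G v \<and> y \<in> point_stabilizer G v)"
    using main_part[OF assms(1,2,4,5,6,7)] by blast
  have first: "\<not> point_stabilizer G v \<subseteq> F" if v: "v \<in> V" for v
  proof
    assume sub: "point_stabilizer G v \<subseteq> F"
    let ?S = "point_stabilizer G v - {\<one>\<^bsub>BijGroup V\<^esub>}"
    have "finite (point_stabilizer G v)" using assms(2) by (auto simp: point_stabilizer_def)
    moreover have "\<one>\<^bsub>BijGroup V\<^esub> \<in> point_stabilizer G v"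
      using v subgroup.one_closed[OF assms(1)] bij_one_apply[OF v]
      by (auto simp: point_stabilizer_def)
    ultimately have "card ?S = 2" using assms(4) v
      by (simp add: card_Diff_singleton)
    then obtain a b where "a \<in> ?S" "b \<in> ?S" "a \<noteq> b"
      by (auto simp: card_2_iff)
    then show False using second sub v by blast
  qed
  show ?thesis using first second by blast
qed

end
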